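(* Let $(l,k,b)$ be a suspension triplet for $(X_A,\sigma_A)$. For every $(x,r)\in X^{\mathbb R}_{A,b}$ with $r\ge l(x)$ there exists $(z,s)\in X_A\times\mathbb R$ with $b(z)\le s<l(z)$ such that $(x,r)\sim_{l,k}(z,s)$.
   Context: Let $N>1$ and $A$ an irreducible $N\times N$ $\{0,1\}$-matrix which is not a permutation matrix. $X_A$ is the compact space of sequences $(x_n)_{n\in\mathbb N}$, $x_n\in\{1,\dots,N\}$, $A(x_n,x_{n+1})=1$, with $\sigma_A((x_n)_n)=(x_{n+1})_n$. $\mathbb Z_+$, $\mathbb R_+$ are nonnegative integers/reals. $H^A$ is the quotient of $C(X_A,\mathbb Z)$ by $\{u-u\circ\sigma_A\}$, $H^A_+$ the classes of $\mathbb Z_+$-valued continuous functions; $[f]\in H^A_+$ is an order unit if for every $[u]\in H^A$ some $n\in\mathbb N$ has $n[f]-[u]\in H^A_+$. A suspension triplet is $(l,k,b)$ with $l,k\in C(X_A,\mathbb R_+)$, $b\in C(X_A,\mathbb R)$ such that $c=l-k$ is integer-valued with $[c]$ an order unit, and $l-b$, $k-b\circ\sigma_A$ take values in $\mathbb Z_+$. $X^{\mathbb R}_{A,b}=\{(x,r)\in X_A\times\mathbb R: r\ge b(x)\}$, and $\sim_{l,k}$ is the equivalence relation on it generated by $(x,r)\sim_{l,k}(\sigma_A(x),r-c(x))$ whenever $r\ge l(x)$. *)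

theory Defs
  imports "HOL-Analysis.Analysis"
begin

definition zero_one_matrix :: "nat \<Rightarrow> (nat \<Rightarrow> nat \<Rightarrow> int) \<Rightarrow> bool" where
  "zero_one_matrix N A \<longleftrightarrow> (\<forall>i\<in>{1..N}. \<forall>j\<in>{1..N}. A i j \<in> {0,1})"

definition irreducible_matrix :: "nat \<Rightarrow> (nat \<Rightarrow> nat \<Rightarrow> int) \<Rightarrow> bool" where
  "irreducible_matrix N A \<longleftrightarrow> (\<forall>i\<in>{1..N}. \<forall>j\<in>{1..N}. \<exists>m::nat. \<exists>p::nat \<Rightarrow> nat.
      m \<ge> 1 \<and> p 0 = i \<and> p m = j \<and> (\<forall>t\<le>m. p t \<in> {1..N}) \<and>
      (\<forall>t<m. A (p t) (p (Suc t)) = 1))"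

definition permutation_matrix :: "nat \<Rightarrow> (nat \<Rightarrow> nat \<Rightarrow> int) \<Rightarrow> bool" where
  "permutation_matrix N A \<longleftrightarrow>
     (\<forall>i\<in>{1..N}. \<forall>j\<in>{1..N}. A i j \<in> {0,1}) \<and>
     (\<forall>i\<in>{1..N}. card {j\<in>{1..N}. A i j = 1} = 1) \<and>
     (\<forall>j\<in>{1..N}. card {i\<in>{1..N}. A i j = 1} = 1)"

text \<open>The one-sided topological Markov shift (with the product topology of
  nat => nat, i.e. the discrete topology on symbols).\<close>
definition XA :: "nat \<Rightarrow> (nat \<Rightarrow> nat \<Rightarrow> int) \<Rightarrow> (nat \<Rightarrow> nat) set" where
  "XA N A = {x. (\<forall>n. x n \<in> {1..N}) \<and> (\<forall>n. A (x n) (x (Suc n)) = 1)}"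

definition sigmaA :: "(nat \<Rightarrow> nat) \<Rightarrow> (nat \<Rightarrow> nat)" where
  "sigmaA x = (\<lambda>n. x (Suc n))"

text \<open>[f] is an order unit of (H^A, H^A_+), for an integer-valued function f
  (given as real-valued with values in the integers): for every u in C(X_A,Z)
  there is n with n f - u = w + v - v o sigma_A for some w in C(X_A,Z_+) and
  v in C(X_A,Z).\<close>
definition order_unit :: "nat \<Rightarrow> (nat \<Rightarrow> nat \<Rightarrow> int) \<Rightarrow> ((nat \<Rightarrow> nat) \<Rightarrow> real) \<Rightarrow> bool" where
  "order_unit N A f \<longleftrightarrow>
     (\<forall>u :: (nat \<Rightarrow> nat) \<Rightarrow> int. continuous_on (XA N A) u \<longrightarrow>
        (\<exists>n::nat. \<exists>w v :: (nat \<Rightarrow> nat) \<Rightarrow> int.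
            continuous_on (XA N A) w \<and> continuous_on (XA N A) v \<and>
            (\<forall>x\<in>XA N A. w x \<ge> 0) \<and>
            (\<forall>x\<in>XA N A. real n * f x - real_of_int (u x)
                 = real_of_int (w x + v x - v (sigmaA x)))))"

definition suspension_triplet ::
  "nat \<Rightarrow> (nat \<Rightarrow> nat \<Rightarrow> int) \<Rightarrow> ((nat \<Rightarrow> nat) \<Rightarrow> real) \<Rightarrow> ((nat \<Rightarrow> nat) \<Rightarrow> real)
     \<Rightarrow> ((nat \<Rightarrow> nat) \<Rightarrow> real) \<Rightarrow> bool" where
  "suspension_triplet N A l k b \<longleftrightarrow>
     continuous_on (XA N A) l \<and> continuous_on (XA N A) k \<and> continuous_on (XA N A) b \<and>
     (\<forall>x\<in>XA N A. l x \<ge> 0 \<and> k x \<ge> 0) \<and>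
     (\<forall>x\<in>XA N A. l x - k x \<in> \<int>) \<and>
     order_unit N A (\<lambda>x. l x - k x) \<and>
     (\<forall>x\<in>XA N A. l x - b x \<in> \<int> \<and> l x - b x \<ge> 0) \<and>
     (\<forall>x\<in>XA N A. k x - b (sigmaA x) \<in> \<int> \<and> k x - b (sigmaA x) \<ge> 0)"

definition XR :: "nat \<Rightarrow> (nat \<Rightarrow> nat \<Rightarrow> int) \<Rightarrow> ((nat \<Rightarrow> nat) \<Rightarrow> real) \<Rightarrow> ((nat \<Rightarrow> nat) \<times> real) set" where
  "XR N A b = {(x, r). x \<in> XA N A \<and> r \<ge> b x}"

definition susp_step ::
  "nat \<Rightarrow> (nat \<Rightarrow> nat \<Rightarrow> int) \<Rightarrow> ((nat \<Rightarrow> nat) \<Rightarrow> real) \<Rightarrow> ((nat \<Rightarrow> nat) \<Rightarrow> real)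
     \<Rightarrow> ((nat \<Rightarrow> nat) \<Rightarrow> real) \<Rightarrow> ((nat \<Rightarrow> nat) \<times> real) \<Rightarrow> ((nat \<Rightarrow> nat) \<times> real) \<Rightarrow> bool" where
  "susp_step N A l k b p q \<longleftrightarrow>
     p \<in> XR N A b \<and> snd p \<ge> l (fst p) \<and>
     q = (sigmaA (fst p), snd p - (l (fst p) - k (fst p)))"

definition susp_equiv ::
  "nat \<Rightarrow> (nat \<Rightarrow> nat \<Rightarrow> int) \<Rightarrow> ((nat \<Rightarrow> nat) \<Rightarrow> real) \<Rightarrow> ((nat \<Rightarrow> nat) \<Rightarrow> real)
     \<Rightarrow> ((nat \<Rightarrow> nat) \<Rightarrow> real) \<Rightarrow> ((nat \<Rightarrow> nat) \<times> real) \<Rightarrow> ((nat \<Rightarrow> nat) \<times> real) \<Rightarrow> bool" where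
  "susp_equiv N A l k b = (\<lambda>p q. p \<in> XR N A b \<and> q \<in> XR N A b \<and>
     (sup (susp_step N A l k b) (susp_step N A l k b)\<inverse>\<inverse>)\<^sup>*\<^sup>* p q)"

end

theory Submission
  imports Defs
begin

lemma sigma_XA: "x \<in> XA N A \<Longrightarrow> sigmaA x \<in> XA N A"
  by (simp add: XA_def sigmaA_def)

lemma iter_XA: "x \<in> XA N A \<Longrightarrow> (sigmaA ^^ i) x \<in> XA N A"
  by (induction i) (auto simp: sigma_XA)

lemma closed_coord: "closed {x::nat\<Rightarrow>nat. x n = i}"
  by (intro closed_Collect_eq continuous_intros) (auto intro: continuous_on_product_coordinates)

lemma XA_eq: "XA N A = (\<Inter>n. {x. x n \<in> {1..N}} \<inter>
   (\<Union>(i,j)\<in>{p\<in>{1..N}\<times>{1..N}. A (fst p) (snd p) = 1}. {x. x n = i} \<inter> {x. x (Suc n) = j}))"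
  by (auto simp: XA_def)

lemma closed_XA: "closed (XA N A)"
proof -
  have c1: "closed {x::nat\<Rightarrow>nat. x n \<in> {1..N}}" for n
  proof -
    have "{x::nat\<Rightarrow>nat. x n \<in> {1..N}} = (\<Union>i\<in>{1..N}. {x. x n = i})" by auto
    thus ?thesis using closed_coord by (metis closed_UN finite_atLeastAtMost)
  qed
  have c2: "closed (\<Union>(i,j)\<in>{p\<in>{1..N}\<times>{1..N}. A (fst p) (snd p) = 1}. {x::nat\<Rightarrow>nat. x n = i} \<inter> {x. x (Suc n) = j})" for n
    by (rule closed_UN) (auto intro!: closed_Int closed_coord)
  show ?thesis unfolding XA_eq
    using c1 c2 by (intro closed_INT) (auto intro: closed_Int)
qed

lemma compact_box: "compact (PiE UNIV (\<lambda>_::nat. {1..N::nat}))"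
proof -
  have "compactin (product_topology (\<lambda>_. euclidean) UNIV) (PiE UNIV (\<lambda>_::nat. {1..N::nat}))"
    by (simp add: compactin_PiE finite_imp_compact)
  thus ?thesis by (simp add: euclidean_product_topology)
qed

lemma compact_XA: "compact (XA N A)"
proof -
  have "XA N A \<subseteq> PiE UNIV (\<lambda>_::nat. {1..N::nat})" by (auto simp: XA_def)
  thus ?thesis using compact_box closed_XA compact_Int_closed
    by (metis inf.absorb_iff2)
qed

lemma ou1:
  assumes "order_unit N A c"
  obtains n w v where "continuous_on (XA N A) w" "continuous_on (XA N A) (v :: (nat\<Rightarrow>nat) \<Rightarrow> int)"
    "\<forall>y\<in>XA N A. w y \<ge> 0"
    "\<forall>y\<in>XA N A. real n * c y - 1 = real_of_int (w y + v y - v (sigmaA y))"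
proof -
  have h: "continuous_on (XA N A) (\<lambda>_::nat\<Rightarrow>nat. 1::int)" by (rule continuous_on_const)
  have "\<exists>n::nat. \<exists>w v :: (nat \<Rightarrow> nat) \<Rightarrow> int.
            continuous_on (XA N A) w \<and> continuous_on (XA N A) v \<and>
            (\<forall>x\<in>XA N A. w x \<ge> 0) \<and>
            (\<forall>x\<in>XA N A. real n * c x - real_of_int ((\<lambda>_. 1) x)
                 = real_of_int (w x + v x - v (sigmaA x)))"
    using assms h unfolding order_unit_def by blast
  then show ?thesis using that by auto
qed

theorem lemma2p3:
  fixes N :: nat and A :: "nat \<Rightarrow> nat \<Rightarrow> int"
    and l k b :: "(nat \<Rightarrow> nat) \<Rightarrow> real" and x :: "nat \<Rightarrow> nat" and r :: real
  assumes "N > 1"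
    and "zero_one_matrix N A"
    and "irreducible_matrix N A"
    and "\<not> permutation_matrix N A"
    and "suspension_triplet N A l k b"
    and "(x, r) \<in> XR N A b"
    and "r \<ge> l x"
  shows "\<exists>z s. z \<in> XA N A \<and> b z \<le> s \<and> s < l z \<and> susp_equiv N A l k b (x, r) (z, s)"
proof -
  note ST = assms(5)[unfolded suspension_triplet_def]
  have xX: "x \<in> XA N A" and rb: "r \<ge> b x" using assms(6) by (auto simp: XR_def)
  define c where "c = (\<lambda>y. l y - k y)"
  define T where "T = (\<lambda>i. (sigmaA ^^ i) x)"
  have TX: "T i \<in> XA N A" for i using iter_XA[OF xX] by (simp add: T_def)
  have TS: "T (Suc i) = sigmaA (T i)" for i by (simp add: T_def)
  have OU: "order_unit N A c" unfolding c_def using ST by (elim conjE)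
  obtain n w v where
    wc: "continuous_on (XA N A) w" and vc: "continuous_on (XA N A) (v :: (nat\<Rightarrow>nat) \<Rightarrow> int)"
    and w0: "\<forall>y\<in>XA N A. w y \<ge> 0"
    and eq: "\<forall>y\<in>XA N A. real n * c y - 1 = real_of_int (w y + v y - v (sigmaA y))"
    by (rule ou1[OF OU])
  have vc': "continuous_on (XA N A) (\<lambda>y. real_of_int (v y))"
    using vc by (intro continuous_intros)
  have "compact ((\<lambda>y. real_of_int (v y)) ` XA N A)" using compact_continuous_image[OF vc' compact_XA] .
  then have "bounded ((\<lambda>y. real_of_int (v y)) ` XA N A)" by (rule compact_imp_bounded)
  then obtain B where B0: "\<forall>y\<in>(\<lambda>y. real_of_int (v y)) ` XA N A. norm y \<le> B" unfolding bounded_iff by (elim exE)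
  have B: "\<forall>y\<in>XA N A. \<bar>real_of_int (v y)\<bar> \<le> B" using B0 by simp
  define S where "S = (\<lambda>m. \<Sum>i<m. c (T i))"
  have Seq: "real n * S m - m = (\<Sum>i<m. real_of_int (w (T i))) + (v (T 0) - v (T m))" for m
  proof -
    have "real n * S m - m = (\<Sum>i<m. real n * c (T i) - 1)"
      by (simp add: S_def sum_distrib_left sum_subtractf)
    also have "\<dots> = (\<Sum>i<m. real_of_int (w (T i)) - (real_of_int (v (T (Suc i))) - v (T i)))"
      using eq TX TS by (intro sum.cong) auto
    also have "\<dots> = (\<Sum>i<m. real_of_int (w (T i))) - (\<Sum>i<m. (real_of_int (v (T (Suc i))) - v (T i)))"
      by (simp add: sum_subtractf)
    also have "\<dots> = (\<Sum>i<m. real_of_int (w (T i))) + (v (T 0) - v (T m))"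
      using sum_lessThan_telescope[of "\<lambda>i. real_of_int (v (T i))" m] by simp
    finally show ?thesis .
  qed
  have Sge: "real n * S m \<ge> m - 2*B" for m
  proof -
    have "(\<Sum>i<m. real_of_int (w (T i))) \<ge> 0" using w0 TX by (intro sum_nonneg) auto
    moreover have "\<bar>v (T 0)\<bar> \<le> B" "\<bar>v (T m)\<bar> \<le> B" using B TX by auto
    ultimately show ?thesis using Seq[of m] by linarith
  qed
  define m1 where "m1 = nat \<lceil>real n * r + 2*B\<rceil> + 1"
  have "real n * r + 2*B \<le> real (nat \<lceil>real n * r + 2*B\<rceil>)" by (rule real_nat_ceiling_ge)
  hence "real n * S m1 > real n * r" using Sge[of m1] unfolding m1_def by simp
  hence Sm1: "S m1 > r"
    by (cases "n = 0") auto
  define R where "R = (\<lambda>m. r - S m)"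
  have l0: "l y \<ge> 0" if "y \<in> XA N A" for y using ST that by auto
  have ex: "\<exists>m. R m < l (T m)" using Sm1 l0[OF TX[of m1]] by (intro exI[of _ m1]) (simp add: R_def)
  define m0 where "m0 = (LEAST m. R m < l (T m))"
  have m0: "R m0 < l (T m0)" unfolding m0_def using LeastI_ex[OF ex] .
  have bef: "l (T j) \<le> R j" if "j < m0" for j
    using not_less_Least[of j "\<lambda>m. R m < l (T m)"] that unfolding m0_def by linarith
  let ?st = "sup (susp_step N A l k b) (susp_step N A l k b)\<inverse>\<inverse>"
  have RS: "R (Suc j) = R j - c (T j)" for j by (simp add: R_def S_def)
  have chain: "(T j, R j) \<in> XR N A b \<and> ?st\<^sup>*\<^sup>* (x, r) (T j, R j)" if "j \<le> m0" for j
    using that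
  proof (induction j)
    case 0
    then show ?case using assms(6) by (simp add: T_def R_def S_def)
  next
    case (Suc j)
    have jm: "j \<le> m0" "j < m0" using Suc.prems by auto
    have IH: "(T j, R j) \<in> XR N A b" "?st\<^sup>*\<^sup>* (x, r) (T j, R j)" using Suc.IH[OF jm(1)] by blast+
    have lj: "l (T j) \<le> R j" using bef[OF jm(2)] .
    have stp: "susp_step N A l k b (T j, R j) (T (Suc j), R (Suc j))"
      using IH(1) lj by (simp add: susp_step_def TS RS c_def)
    have "k (T j) - b (sigmaA (T j)) \<ge> 0" using ST TX by auto
    hence "(T (Suc j), R (Suc j)) \<in> XR N A b"
      using TX[of "Suc j"] lj by (auto simp: XR_def TS RS c_def)
    moreover have "?st\<^sup>*\<^sup>* (x, r) (T (Suc j), R (Suc j))"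
      using IH(2) stp by (meson rtranclp.rtrancl_into_rtrancl sup2I1)
    ultimately show ?case by (intro conjI)
  qed
  have ch: "(T m0, R m0) \<in> XR N A b" "?st\<^sup>*\<^sup>* (x, r) (T m0, R m0)" using chain[of m0] by auto
  show ?thesis
    apply (rule exI[of _ "T m0"], rule exI[of _ "R m0"])
    using ch m0 TX[of m0] assms(6) by (auto simp: susp_equiv_def XR_def)
qed

end
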